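(* Let $(\mathcal{C},\mathbb{E},\mathfrak{s})$ satisfy (ET1), (ET2) and (ET3). If the additive subfunctor $\mathbb{F}\subseteq\mathbb{E}$ has enough special injective morphisms, then $(\mathrm{Ph}(\mathbb{F}),\mathbb{F}\text{-}\mathrm{inj})$ is an $\mathbb{E}$-cotorsion pair of ideals; in particular $\mathrm{Ph}(\mathbb{F})^{\perp_{\mathbb{E}}}=\mathbb{F}\text{-}\mathrm{inj}$.
   Context: $\mathcal{C}$ additive, $\mathbb{E}:\mathcal{C}^{\mathrm{op}}\times\mathcal{C}\to\mathrm{Ab}$ biadditive (ET1); for $\delta\in\mathbb{E}(C,A)$, $a:A\to A'$, $c:C'\to C$ put $a_\star\delta=\mathbb{E}(C,a)(\delta)$, $c^\star\delta=\mathbb{E}(c,A)(\delta)$. (ET2): $\mathfrak{s}$ is an additive realization (Nakaoka–Palu): each $\delta\in\mathbb{E}(C,A)$ is assigned an equivalence class of sequences $A\xrightarrow{x}B\xrightarrow{y}C$ (up to isomorphism of middle terms), $0$ is realized by split sequences, realization respects direct sums, and if $a_\star\delta=c^\star\delta'$ there is $b$ making the realizing sequences commute. Realized pairs are $\mathbb{E}$-triangles $A\to B\to C\overset{\delta}{\dashrightarrow}$; such commuting triples are morphisms of $\mathbb{E}$-triangles. (ET3): given $\mathbb{E}$-triangles $A\xrightarrow{x}B\to C\overset{\delta}{\dashrightarrow}$, $A'\xrightarrow{x'}B'\to C'\overset{\delta'}{\dashrightarrow}$ and $a,b$ with $bx=x'a$, there is $c$ with $(a,b,c)$ a morphism of $\mathbb{E}$-triangles.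 Additive subfunctor $\mathbb{F}$: subgroups $\mathbb{F}(C,A)\subseteq\mathbb{E}(C,A)$ stable under $a_\star,c^\star$; $\mathbb{F}$-triangles are $\mathbb{E}$-triangles with extension in $\mathbb{F}$. $\mathrm{Ph}(\mathbb{F})$: morphisms $\varphi:X\to C$ with $\varphi^\star\delta\in\mathbb{F}(X,A)$ for all $\delta\in\mathbb{E}(C,A)$. $\mathbb{F}\text{-}\mathrm{inj}$: morphisms $i:A\to Y$ with $i_\star\delta=0$ for all $\delta\in\mathbb{F}(C,A)$. $\mathcal{M}^{\perp_{\mathbb{E}}}$ and ${}^{\perp_{\mathbb{E}}}\mathcal{M}$: the classes of $g:A\to Y$ with $m^\star g_\star\delta=0$ (for all $m\in\mathcal{M}$, $m:X\to C$, $\delta\in\mathbb{E}(C,A)$), resp. of $g:X\to C$ with $g^\star m_\star\delta=0$ (for all $m\in\mathcal{M}$, $m:A\to Y$, $\delta\in\mathbb{E}(C,A)$). An $\mathbb{E}$-cotorsion pair is a pair of ideals $(\mathcal{I},\mathcal{J})$ with $\mathcal{I}={}^{\perp_{\mathbb{E}}}\mathcal{J}$, $\mathcal{J}=\mathcal{I}^{\perp_{\mathbb{E}}}$. $\mathbb{F}$ has enough special injective morphisms if for every $A$ there exist an $\mathbb{F}$-triangle $A\xrightarrow{e}B\to C\overset{\delta}{\dashrightarrow}$ with $e\in\mathbb{F}\text{-}\mathrm{inj}$, an $\mathbb{E}$-triangle $A\to B'\to C'\overset{\delta'}{\dashrightarrow}$ and a morphism of $\mathbb{E}$-triangles $(\mathrm{id}_A,b,\varphi)$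 from the first to the second with $\varphi\in\mathrm{Ph}(\mathbb{F})$. *)

theory Defs
  imports "HOL-Algebra.Group"
begin

record ('o, 'm, 'e) extri_data =
  obj   :: "'o set"
  mor   :: "'m set"
  dm    :: "'m \<Rightarrow> 'o"
  cd    :: "'m \<Rightarrow> 'o"
  cmp   :: "'m \<Rightarrow> 'm \<Rightarrow> 'm"                (* cmp g f = g o f *)
  idm   :: "'o \<Rightarrow> 'm"
  madd  :: "'m \<Rightarrow> 'm \<Rightarrow> 'm"
  mzero :: "'o \<Rightarrow> 'o \<Rightarrow> 'm"
  Ext   :: "'o \<Rightarrow> 'o \<Rightarrow> 'e set"            (* Ext K C A = E(C,A) *)
  eadd  :: "'o \<Rightarrow> 'o \<Rightarrow> 'e \<Rightarrow> 'e \<Rightarrow> 'e"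
  ezero :: "'o \<Rightarrow> 'o \<Rightarrow> 'e"
  push  :: "'o \<Rightarrow> 'm \<Rightarrow> 'e \<Rightarrow> 'e"          (* push K C a \<delta> = a_* \<delta>, \<delta> \<in> E(C, dm a) *)
  pull  :: "'o \<Rightarrow> 'm \<Rightarrow> 'e \<Rightarrow> 'e"          (* pull K A c \<delta> = c^* \<delta>, \<delta> \<in> E(cd c, A) *)
  real  :: "'o \<Rightarrow> 'o \<Rightarrow> 'e \<Rightarrow> ('m \<times> 'm) set" (* realization s(\<delta>) for \<delta> \<in> E(C,A) *)

definition Hom :: "('o,'m,'e) extri_data \<Rightarrow> 'o \<Rightarrow> 'o \<Rightarrow> 'm set" where
  "Hom K A B = {f \<in> mor K. dm K f = A \<and> cd K f = B}"

definition HomGrp :: "('o,'m,'e) extri_data \<Rightarrow> 'o \<Rightarrow> 'o \<Rightarrow> 'm monoid" where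
  "HomGrp K A B = \<lparr>carrier = Hom K A B, mult = madd K, one = mzero K A B\<rparr>"

definition ExtGrp :: "('o,'m,'e) extri_data \<Rightarrow> 'o \<Rightarrow> 'o \<Rightarrow> 'e monoid" where
  "ExtGrp K C A = \<lparr>carrier = Ext K C A, mult = eadd K C A, one = ezero K C A\<rparr>"

definition is_category :: "('o,'m,'e) extri_data \<Rightarrow> bool" where
  "is_category K \<longleftrightarrow>
     (\<forall>f \<in> mor K. dm K f \<in> obj K \<and> cd K f \<in> obj K) \<and>
     (\<forall>A \<in> obj K. idm K A \<in> Hom K A A) \<and>
     (\<forall>A \<in> obj K. \<forall>B \<in> obj K. \<forall>C \<in> obj K. \<forall>f \<in> Hom K A B. \<forall>g \<in> Hom K B C.
        cmp K g f \<in> Hom K A C) \<and>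
     (\<forall>f \<in> mor K. cmp K f (idm K (dm K f)) = f \<and> cmp K (idm K (cd K f)) f = f) \<and>
     (\<forall>f \<in> mor K. \<forall>g \<in> mor K. \<forall>h \<in> mor K. cd K f = dm K g \<longrightarrow> cd K g = dm K h \<longrightarrow>
        cmp K h (cmp K g f) = cmp K (cmp K h g) f)"

definition is_biproduct ::
  "('o,'m,'e) extri_data \<Rightarrow> 'o \<Rightarrow> 'o \<Rightarrow> 'o \<Rightarrow> 'm \<Rightarrow> 'm \<Rightarrow> 'm \<Rightarrow> 'm \<Rightarrow> bool" where
  "is_biproduct K A B P i1 i2 p1 p2 \<longleftrightarrow>
     P \<in> obj K \<and> i1 \<in> Hom K A P \<and> i2 \<in> Hom K B P \<and> p1 \<in> Hom K P A \<and> p2 \<in> Hom K P B \<and>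
     cmp K p1 i1 = idm K A \<and> cmp K p2 i2 = idm K B \<and>
     cmp K p1 i2 = mzero K B A \<and> cmp K p2 i1 = mzero K A B \<and>
     madd K (cmp K i1 p1) (cmp K i2 p2) = idm K P"

definition is_additive_category :: "('o,'m,'e) extri_data \<Rightarrow> bool" where
  "is_additive_category K \<longleftrightarrow>
     is_category K \<and>
     (\<forall>A \<in> obj K. \<forall>B \<in> obj K. comm_group (HomGrp K A B)) \<and>
     (\<forall>A \<in> obj K. \<forall>B \<in> obj K. \<forall>C \<in> obj K. \<forall>f \<in> Hom K A B. \<forall>f' \<in> Hom K A B. \<forall>g \<in> Hom K B C.
        cmp K g (madd K f f') = madd K (cmp K g f) (cmp K g f')) \<and>
     (\<forall>A \<in> obj K. \<forall>B \<in> obj K. \<forall>C \<in> obj K. \<forall>f \<in> Hom K A B. \<forall>g \<in> Hom K B C. \<forall>g' \<in> Hom K B C.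
        cmp K (madd K g g') f = madd K (cmp K g f) (cmp K g' f)) \<and>
     (\<exists>Z \<in> obj K. \<forall>X \<in> obj K. Hom K Z X = {mzero K Z X} \<and> Hom K X Z = {mzero K X Z}) \<and>
     (\<forall>A \<in> obj K. \<forall>B \<in> obj K. \<exists>P i1 i2 p1 p2. is_biproduct K A B P i1 i2 p1 p2)"

text \<open>(ET1): \<open>E\<close> is a biadditive functor \<open>C^op \<times> C \<rightarrow> Ab\<close>.\<close>

definition ET1 :: "('o,'m,'e) extri_data \<Rightarrow> bool" where
  "ET1 K \<longleftrightarrow>
     (\<forall>C \<in> obj K. \<forall>A \<in> obj K. comm_group (ExtGrp K C A)) \<and>
     \<comment> \<open>covariant part\<close>
     (\<forall>C \<in> obj K. \<forall>a \<in> mor K. \<forall>\<delta> \<in> Ext K C (dm K a). push K C a \<delta> \<in> Ext K C (cd K a)) \<and>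
     (\<forall>C \<in> obj K. \<forall>a \<in> mor K. \<forall>\<delta> \<in> Ext K C (dm K a). \<forall>\<delta>' \<in> Ext K C (dm K a).
        push K C a (eadd K C (dm K a) \<delta> \<delta>') = eadd K C (cd K a) (push K C a \<delta>) (push K C a \<delta>')) \<and>
     (\<forall>C \<in> obj K. \<forall>A \<in> obj K. \<forall>\<delta> \<in> Ext K C A. push K C (idm K A) \<delta> = \<delta>) \<and>
     (\<forall>C \<in> obj K. \<forall>a \<in> mor K. \<forall>a' \<in> mor K. \<forall>\<delta> \<in> Ext K C (dm K a). cd K a = dm K a' \<longrightarrow>
        push K C (cmp K a' a) \<delta> = push K C a' (push K C a \<delta>)) \<and>
     (\<forall>C \<in> obj K. \<forall>A \<in> obj K. \<forall>A' \<in> obj K. \<forall>a \<in> Hom K A A'. \<forall>a' \<in> Hom K A A'. \<forall>\<delta> \<in> Ext K C A.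
        push K C (madd K a a') \<delta> = eadd K C A' (push K C a \<delta>) (push K C a' \<delta>)) \<and>
     \<comment> \<open>contravariant part\<close>
     (\<forall>A \<in> obj K. \<forall>c \<in> mor K. \<forall>\<delta> \<in> Ext K (cd K c) A. pull K A c \<delta> \<in> Ext K (dm K c) A) \<and>
     (\<forall>A \<in> obj K. \<forall>c \<in> mor K. \<forall>\<delta> \<in> Ext K (cd K c) A. \<forall>\<delta>' \<in> Ext K (cd K c) A.
        pull K A c (eadd K (cd K c) A \<delta> \<delta>') = eadd K (dm K c) A (pull K A c \<delta>) (pull K A c \<delta>')) \<and>
     (\<forall>C \<in> obj K. \<forall>A \<in> obj K. \<forall>\<delta> \<in> Ext K C A. pull K A (idm K C) \<delta> = \<delta>) \<and>
     (\<forall>A \<in> obj K. \<forall>c \<in> mor K. \<forall>c' \<in> mor K. \<forall>\<delta> \<in> Ext K (cd K c) A. cd K c' = dm K c \<longrightarrow>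
        pull K A (cmp K c c') \<delta> = pull K A c' (pull K A c \<delta>)) \<and>
     (\<forall>A \<in> obj K. \<forall>C \<in> obj K. \<forall>C' \<in> obj K. \<forall>c \<in> Hom K C' C. \<forall>c' \<in> Hom K C' C. \<forall>\<delta> \<in> Ext K C A.
        pull K A (madd K c c') \<delta> = eadd K C' A (pull K A c \<delta>) (pull K A c' \<delta>)) \<and>
     \<comment> \<open>bifunctoriality\<close>
     (\<forall>a \<in> mor K. \<forall>c \<in> mor K. \<forall>\<delta> \<in> Ext K (cd K c) (dm K a).
        push K (dm K c) a (pull K (dm K a) c \<delta>) = pull K (cd K a) c (push K (cd K c) a \<delta>))"

definition is_iso :: "('o,'m,'e) extri_data \<Rightarrow> 'm \<Rightarrow> bool" where
  "is_iso K b \<longleftrightarrow> b \<in> mor K \<and> (\<exists>b' \<in> Hom K (cd K b) (dm K b).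
      cmp K b' b = idm K (dm K b) \<and> cmp K b b' = idm K (cd K b))"

text \<open>Direct sum of morphisms \<open>f\<oplus>f' : A\<oplus>A' \<rightarrow> B\<oplus>B'\<close> w.r.t. chosen biproduct data.\<close>
definition msum :: "('o,'m,'e) extri_data \<Rightarrow> 'm \<Rightarrow> 'm \<Rightarrow> 'm \<Rightarrow> 'm \<Rightarrow> 'm \<Rightarrow> 'm \<Rightarrow> 'm" where
  "msum K f f' pA pA' iB iB' = madd K (cmp K iB (cmp K f pA)) (cmp K iB' (cmp K f' pA'))"

definition ET2 :: "('o,'m,'e) extri_data \<Rightarrow> bool" where
  "ET2 K \<longleftrightarrow>
     \<comment> \<open>each \<open>\<delta>\<close> is assigned an (inhabited) isomorphism class of sequences \<open>A \<rightarrow> B \<rightarrow> C\<close>\<close>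
     (\<forall>C \<in> obj K. \<forall>A \<in> obj K. \<forall>\<delta> \<in> Ext K C A.
        real K C A \<delta> \<noteq> {} \<and>
        (\<forall>(x, y) \<in> real K C A \<delta>. cd K x \<in> obj K \<and> x \<in> Hom K A (cd K x) \<and> y \<in> Hom K (cd K x) C \<and>
           (\<forall>x' y'. (x', y') \<in> real K C A \<delta> \<longleftrightarrow>
              (\<exists>B' \<in> obj K. x' \<in> Hom K A B' \<and> y' \<in> Hom K B' C \<and>
                 (\<exists>b \<in> Hom K (cd K x) B'. is_iso K b \<and> cmp K b x = x' \<and> cmp K y' b = y))))) \<and>
     \<comment> \<open>\<open>0\<close> is realized by split sequences\<close>
     (\<forall>C \<in> obj K. \<forall>A \<in> obj K. \<exists>P i1 i2 p1 p2.
        is_biproduct K A C P i1 i2 p1 p2 \<and> (i1, p2) \<in> real K C A (ezero K C A)) \<and>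
     \<comment> \<open>realization respects direct sums\<close>
     (\<forall>C \<in> obj K. \<forall>A \<in> obj K. \<forall>C' \<in> obj K. \<forall>A' \<in> obj K.
      \<forall>\<delta> \<in> Ext K C A. \<forall>\<delta>' \<in> Ext K C' A'. \<forall>x y x' y'.
      (x, y) \<in> real K C A \<delta> \<longrightarrow> (x', y') \<in> real K C' A' \<delta>' \<longrightarrow>
      (\<forall>PA iA iA' pA pA' PB iB iB' pB pB' PC iC iC' pC pC'.
         is_biproduct K A A' PA iA iA' pA pA' \<longrightarrow>
         is_biproduct K (cd K x) (cd K x') PB iB iB' pB pB' \<longrightarrow>
         is_biproduct K C C' PC iC iC' pC pC' \<longrightarrow>
         (msum K x x' pA pA' iB iB', msum K y y' pB pB' iC iC') \<in>
           real K PC PA (eadd K PC PA (push K PC iA (pull K A pC \<delta>))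
                                      (push K PC iA' (pull K A' pC' \<delta>'))))) \<and>
     \<comment> \<open>morphism condition\<close>
     (\<forall>C \<in> obj K. \<forall>A \<in> obj K. \<forall>C' \<in> obj K. \<forall>A' \<in> obj K.
      \<forall>\<delta> \<in> Ext K C A. \<forall>\<delta>' \<in> Ext K C' A'. \<forall>x y x' y' a c.
      (x, y) \<in> real K C A \<delta> \<longrightarrow> (x', y') \<in> real K C' A' \<delta>' \<longrightarrow>
      a \<in> Hom K A A' \<longrightarrow> c \<in> Hom K C C' \<longrightarrow> push K C a \<delta> = pull K A' c \<delta>' \<longrightarrow>
      (\<exists>b \<in> Hom K (cd K x) (cd K x'). cmp K b x = cmp K x' a \<and> cmp K y' b = cmp K c y))"

definition etri :: "('o,'m,'e) extri_data \<Rightarrow> 'o \<Rightarrow> 'm \<Rightarrow> 'm \<Rightarrow> 'o \<Rightarrow> 'e \<Rightarrow> bool" where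
  "etri K A x y C \<delta> \<longleftrightarrow> A \<in> obj K \<and> C \<in> obj K \<and> \<delta> \<in> Ext K C A \<and> (x, y) \<in> real K C A \<delta>"

definition etri_morph ::
  "('o,'m,'e) extri_data \<Rightarrow> 'o \<Rightarrow> 'm \<Rightarrow> 'm \<Rightarrow> 'o \<Rightarrow> 'e \<Rightarrow> 'o \<Rightarrow> 'm \<Rightarrow> 'm \<Rightarrow> 'o \<Rightarrow> 'e
     \<Rightarrow> 'm \<Rightarrow> 'm \<Rightarrow> 'm \<Rightarrow> bool" where
  "etri_morph K A x y C \<delta> A' x' y' C' \<delta>' a b c \<longleftrightarrow>
     a \<in> Hom K A A' \<and> b \<in> Hom K (cd K x) (cd K x') \<and> c \<in> Hom K C C' \<and>
     cmp K b x = cmp K x' a \<and> cmp K c y = cmp K y' b \<and>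
     push K C a \<delta> = pull K A' c \<delta>'"

definition ET3 :: "('o,'m,'e) extri_data \<Rightarrow> bool" where
  "ET3 K \<longleftrightarrow>
     (\<forall>A x y C \<delta> A' x' y' C' \<delta>' a b.
        etri K A x y C \<delta> \<longrightarrow> etri K A' x' y' C' \<delta>' \<longrightarrow>
        a \<in> Hom K A A' \<longrightarrow> b \<in> Hom K (cd K x) (cd K x') \<longrightarrow> cmp K b x = cmp K x' a \<longrightarrow>
        (\<exists>c. etri_morph K A x y C \<delta> A' x' y' C' \<delta>' a b c))"

definition additive_subfunctor :: "('o,'m,'e) extri_data \<Rightarrow> ('o \<Rightarrow> 'o \<Rightarrow> 'e set) \<Rightarrow> bool" where
  "additive_subfunctor K F \<longleftrightarrow>
     (\<forall>C \<in> obj K. \<forall>A \<in> obj K. subgroup (F C A) (ExtGrp K C A)) \<and>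
     (\<forall>C \<in> obj K. \<forall>a \<in> mor K. \<forall>\<delta> \<in> F C (dm K a). push K C a \<delta> \<in> F C (cd K a)) \<and>
     (\<forall>A \<in> obj K. \<forall>c \<in> mor K. \<forall>\<delta> \<in> F (cd K c) A. pull K A c \<delta> \<in> F (dm K c) A)"

definition Ph :: "('o,'m,'e) extri_data \<Rightarrow> ('o \<Rightarrow> 'o \<Rightarrow> 'e set) \<Rightarrow> 'm set" where
  "Ph K F = {\<phi> \<in> mor K. \<forall>A \<in> obj K. \<forall>\<delta> \<in> Ext K (cd K \<phi>) A. pull K A \<phi> \<delta> \<in> F (dm K \<phi>) A}"

definition F_inj :: "('o,'m,'e) extri_data \<Rightarrow> ('o \<Rightarrow> 'o \<Rightarrow> 'e set) \<Rightarrow> 'm set" where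
  "F_inj K F = {i \<in> mor K. \<forall>C \<in> obj K. \<forall>\<delta> \<in> F C (dm K i). push K C i \<delta> = ezero K C (cd K i)}"

definition perpR :: "('o,'m,'e) extri_data \<Rightarrow> 'm set \<Rightarrow> 'm set" where
  "perpR K M = {g \<in> mor K. \<forall>m \<in> M. \<forall>\<delta> \<in> Ext K (cd K m) (dm K g).
      pull K (cd K g) m (push K (cd K m) g \<delta>) = ezero K (dm K m) (cd K g)}"

definition perpL :: "('o,'m,'e) extri_data \<Rightarrow> 'm set \<Rightarrow> 'm set" where
  "perpL K M = {g \<in> mor K. \<forall>m \<in> M. \<forall>\<delta> \<in> Ext K (cd K g) (dm K m).
      pull K (cd K m) g (push K (cd K g) m \<delta>) = ezero K (dm K g) (cd K m)}"

definition is_ideal :: "('o,'m,'e) extri_data \<Rightarrow> 'm set \<Rightarrow> bool" where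
  "is_ideal K I \<longleftrightarrow> I \<subseteq> mor K \<and>
     (\<forall>A \<in> obj K. \<forall>B \<in> obj K. subgroup (I \<inter> Hom K A B) (HomGrp K A B)) \<and>
     (\<forall>f \<in> I. \<forall>g \<in> mor K. \<forall>h \<in> mor K. dm K g = cd K f \<longrightarrow> cd K h = dm K f \<longrightarrow>
        cmp K g (cmp K f h) \<in> I)"

definition E_cotorsion_pair :: "('o,'m,'e) extri_data \<Rightarrow> 'm set \<Rightarrow> 'm set \<Rightarrow> bool" where
  "E_cotorsion_pair K I J \<longleftrightarrow> is_ideal K I \<and> is_ideal K J \<and> I = perpL K J \<and> J = perpR K I"

definition enough_special_inj :: "('o,'m,'e) extri_data \<Rightarrow> ('o \<Rightarrow> 'o \<Rightarrow> 'e set) \<Rightarrow> bool" where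
  "enough_special_inj K F \<longleftrightarrow>
     (\<forall>A \<in> obj K. \<exists>e y C \<delta>. etri K A e y C \<delta> \<and> \<delta> \<in> F C A \<and> e \<in> F_inj K F \<and>
        (\<exists>x' y' C' \<delta>' b \<phi>. etri K A x' y' C' \<delta>' \<and> \<phi> \<in> Ph K F \<and>
           etri_morph K A e y C \<delta> A x' y' C' \<delta>' (idm K A) b \<phi>))"

end

theory Submission
  imports Defs
begin

lemma Hom_iff: "f \<in> Hom K A B \<longleftrightarrow> f \<in> mor K \<and> dm K f = A \<and> cd K f = B"
  by (simp add: Hom_def)

locale ctx =
  fixes K :: "('o, 'm, 'e) extri_data" and F :: "'o \<Rightarrow> 'o \<Rightarrow> 'e set"
  assumes add: "is_additive_category K" and et1: "ET1 K" and et2: "ET2 K" and et3: "ET3 K"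
    and sub: "additive_subfunctor K F"
    and esi: "enough_special_inj K F"
begin

lemma cat: "is_category K" using add unfolding is_additive_category_def by blast

lemma mor_obj: "f \<in> mor K \<Longrightarrow> dm K f \<in> obj K \<and> cd K f \<in> obj K"
  using cat unfolding is_category_def by blast

lemma idm_Hom: "A \<in> obj K \<Longrightarrow> idm K A \<in> Hom K A A"
  using cat unfolding is_category_def by blast

lemma cmp_Hom: "f \<in> mor K \<Longrightarrow> g \<in> mor K \<Longrightarrow> dm K g = cd K f \<Longrightarrow> cmp K g f \<in> Hom K (dm K f) (cd K g)"
proof -
  assume a: "f \<in> mor K" "g \<in> mor K" "dm K g = cd K f"
  have "\<forall>A \<in> obj K. \<forall>B \<in> obj K. \<forall>C \<in> obj K. \<forall>f \<in> Hom K A B. \<forall>g \<in> Hom K B C.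
        cmp K g f \<in> Hom K A C" using cat unfolding is_category_def by blast
  then show ?thesis using a mor_obj[of f] mor_obj[of g] by (auto simp: Hom_iff)
qed

lemma cmp_mor: "f \<in> mor K \<Longrightarrow> g \<in> mor K \<Longrightarrow> dm K g = cd K f \<Longrightarrow>
   cmp K g f \<in> mor K \<and> dm K (cmp K g f) = dm K f \<and> cd K (cmp K g f) = cd K g"
  using cmp_Hom by (simp add: Hom_iff)

lemma cmp_idl: "f \<in> mor K \<Longrightarrow> cmp K (idm K (cd K f)) f = f"
  using cat unfolding is_category_def by blast

lemma assoc: "f \<in> mor K \<Longrightarrow> g \<in> mor K \<Longrightarrow> h \<in> mor K \<Longrightarrow> cd K f = dm K g \<Longrightarrow> cd K g = dm K h \<Longrightarrow>
        cmp K h (cmp K g f) = cmp K (cmp K h g) f"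
  using cat unfolding is_category_def by blast

lemma homgrp: "A \<in> obj K \<Longrightarrow> B \<in> obj K \<Longrightarrow> comm_group (HomGrp K A B)"
  using add unfolding is_additive_category_def by blast

lemmas et1u = et1[unfolded ET1_def]

lemma extgrp: "C \<in> obj K \<Longrightarrow> A \<in> obj K \<Longrightarrow> comm_group (ExtGrp K C A)"
  using et1u[THEN conjunct1] by blast

lemma hg_simps[simp]: "carrier (HomGrp K A B) = Hom K A B" "mult (HomGrp K A B) = madd K"
  "one (HomGrp K A B) = mzero K A B"
  by (simp_all add: HomGrp_def)

lemma eg_simps[simp]: "carrier (ExtGrp K C A) = Ext K C A" "mult (ExtGrp K C A) = eadd K C A"
  "one (ExtGrp K C A) = ezero K C A"
  by (simp_all add: ExtGrp_def)

lemma push_closed: "C \<in> obj K \<Longrightarrow> a \<in> mor K \<Longrightarrow> \<delta> \<in> Ext K C (dm K a) \<Longrightarrow> push K C a \<delta> \<in> Ext K C (cd K a)"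
  using et1u[THEN conjunct2, THEN conjunct1] by blast
lemma pull_closed: "A \<in> obj K \<Longrightarrow> c \<in> mor K \<Longrightarrow> \<delta> \<in> Ext K (cd K c) A \<Longrightarrow> pull K A c \<delta> \<in> Ext K (dm K c) A"
  using et1u[THEN conjunct2, THEN conjunct2, THEN conjunct2, THEN conjunct2, THEN conjunct2, THEN conjunct2, THEN conjunct1] by blast
lemma push_cmp: "C \<in> obj K \<Longrightarrow> a \<in> mor K \<Longrightarrow> a' \<in> mor K \<Longrightarrow> \<delta> \<in> Ext K C (dm K a) \<Longrightarrow> cd K a = dm K a' \<Longrightarrow>
        push K C (cmp K a' a) \<delta> = push K C a' (push K C a \<delta>)"
  using et1u[THEN conjunct2, THEN conjunct2, THEN conjunct2, THEN conjunct2, THEN conjunct1] by blast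
lemma pull_cmp: "A \<in> obj K \<Longrightarrow> c \<in> mor K \<Longrightarrow> c' \<in> mor K \<Longrightarrow> \<delta> \<in> Ext K (cd K c) A \<Longrightarrow> cd K c' = dm K c \<Longrightarrow>
        pull K A (cmp K c c') \<delta> = pull K A c' (pull K A c \<delta>)"
  using et1u[THEN conjunct2, THEN conjunct2, THEN conjunct2, THEN conjunct2, THEN conjunct2, THEN conjunct2, THEN conjunct2, THEN conjunct2, THEN conjunct2, THEN conjunct1] by blast
lemma pull_id: "C \<in> obj K \<Longrightarrow> A \<in> obj K \<Longrightarrow> \<delta> \<in> Ext K C A \<Longrightarrow> pull K A (idm K C) \<delta> = \<delta>"
  using et1u[THEN conjunct2, THEN conjunct2, THEN conjunct2, THEN conjunct2, THEN conjunct2, THEN conjunct2, THEN conjunct2, THEN conjunct2, THEN conjunct1] by blast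
lemma push_id: "C \<in> obj K \<Longrightarrow> A \<in> obj K \<Longrightarrow> \<delta> \<in> Ext K C A \<Longrightarrow> push K C (idm K A) \<delta> = \<delta>"
  using et1u[THEN conjunct2, THEN conjunct2, THEN conjunct2, THEN conjunct1] by blast
lemma bif: "a \<in> mor K \<Longrightarrow> c \<in> mor K \<Longrightarrow> \<delta> \<in> Ext K (cd K c) (dm K a) \<Longrightarrow>
        push K (dm K c) a (pull K (dm K a) c \<delta>) = pull K (cd K a) c (push K (cd K c) a \<delta>)"
  using et1u[THEN conjunct2, THEN conjunct2, THEN conjunct2, THEN conjunct2, THEN conjunct2, THEN conjunct2, THEN conjunct2, THEN conjunct2, THEN conjunct2, THEN conjunct2, THEN conjunct2] by blast

lemma push_hom: "C \<in> obj K \<Longrightarrow> a \<in> mor K \<Longrightarrow>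
   group_hom (ExtGrp K C (dm K a)) (ExtGrp K C (cd K a)) (push K C a)"
proof -
  assume a: "C \<in> obj K" "a \<in> mor K"
  have m: "\<forall>\<delta> \<in> Ext K C (dm K a). \<forall>\<delta>' \<in> Ext K C (dm K a).
        push K C a (eadd K C (dm K a) \<delta> \<delta>') = eadd K C (cd K a) (push K C a \<delta>) (push K C a \<delta>')"
    using et1u[THEN conjunct2, THEN conjunct2, THEN conjunct1] a by blast
  show ?thesis
    unfolding group_hom_def group_hom_axioms_def hom_def
    using a mor_obj[of a] extgrp m push_closed
    by (auto simp: comm_group.axioms(2))
qed

lemma pull_hom: "A \<in> obj K \<Longrightarrow> c \<in> mor K \<Longrightarrow>
   group_hom (ExtGrp K (cd K c) A) (ExtGrp K (dm K c) A) (pull K A c)"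
proof -
  assume a: "A \<in> obj K" "c \<in> mor K"
  have m: "\<forall>\<delta> \<in> Ext K (cd K c) A. \<forall>\<delta>' \<in> Ext K (cd K c) A.
        pull K A c (eadd K (cd K c) A \<delta> \<delta>') = eadd K (dm K c) A (pull K A c \<delta>) (pull K A c \<delta>')"
    using et1u[THEN conjunct2, THEN conjunct2, THEN conjunct2, THEN conjunct2, THEN conjunct2, THEN conjunct2, THEN conjunct2, THEN conjunct1] a by blast
  show ?thesis
    unfolding group_hom_def group_hom_axioms_def hom_def
    using a mor_obj[of c] extgrp m pull_closed
    by (auto simp: comm_group.axioms(2))
qed

lemma push_zero: "C \<in> obj K \<Longrightarrow> a \<in> mor K \<Longrightarrow> push K C a (ezero K C (dm K a)) = ezero K C (cd K a)"
  using group_hom.hom_one[OF push_hom] by simp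

lemma pushmor_hom: "C \<in> obj K \<Longrightarrow> A \<in> obj K \<Longrightarrow> A' \<in> obj K \<Longrightarrow> \<delta> \<in> Ext K C A \<Longrightarrow>
   group_hom (HomGrp K A A') (ExtGrp K C A') (\<lambda>a. push K C a \<delta>)"
proof -
  assume a: "C \<in> obj K" "A \<in> obj K" "A' \<in> obj K" "\<delta> \<in> Ext K C A"
  have m: "\<forall>a \<in> Hom K A A'. \<forall>a' \<in> Hom K A A'.
        push K C (madd K a a') \<delta> = eadd K C A' (push K C a \<delta>) (push K C a' \<delta>)"
    using et1u[THEN conjunct2, THEN conjunct2, THEN conjunct2, THEN conjunct2, THEN conjunct2, THEN conjunct1] a by blast
  show ?thesis
    unfolding group_hom_def group_hom_axioms_def hom_def
    using a homgrp extgrp m push_closed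
    by (auto simp: comm_group.axioms(2) Hom_iff)
qed

lemma pullmor_hom: "C \<in> obj K \<Longrightarrow> A \<in> obj K \<Longrightarrow> C' \<in> obj K \<Longrightarrow> \<delta> \<in> Ext K C A \<Longrightarrow>
   group_hom (HomGrp K C' C) (ExtGrp K C' A) (\<lambda>c. pull K A c \<delta>)"
proof -
  assume a: "C \<in> obj K" "A \<in> obj K" "C' \<in> obj K" "\<delta> \<in> Ext K C A"
  have m: "\<forall>c \<in> Hom K C' C. \<forall>c' \<in> Hom K C' C.
        pull K A (madd K c c') \<delta> = eadd K C' A (pull K A c \<delta>) (pull K A c' \<delta>)"
    using et1u[THEN conjunct2, THEN conjunct2, THEN conjunct2, THEN conjunct2, THEN conjunct2, THEN conjunct2, THEN conjunct2, THEN conjunct2, THEN conjunct2, THEN conjunct2, THEN conjunct1] a by blast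
  show ?thesis
    unfolding group_hom_def group_hom_axioms_def hom_def
    using a homgrp extgrp m pull_closed
    by (auto simp: comm_group.axioms(2) Hom_iff)
qed

lemma subF: "C \<in> obj K \<Longrightarrow> A \<in> obj K \<Longrightarrow> subgroup (F C A) (ExtGrp K C A)"
  using sub unfolding additive_subfunctor_def by blast
lemma F_Ext: "C \<in> obj K \<Longrightarrow> A \<in> obj K \<Longrightarrow> \<delta> \<in> F C A \<Longrightarrow> \<delta> \<in> Ext K C A"
  using subgroup.subset[OF subF] by force
lemma F_push: "C \<in> obj K \<Longrightarrow> a \<in> mor K \<Longrightarrow> \<delta> \<in> F C (dm K a) \<Longrightarrow> push K C a \<delta> \<in> F C (cd K a)"
  using sub unfolding additive_subfunctor_def by blast
lemma F_pull: "A \<in> obj K \<Longrightarrow> c \<in> mor K \<Longrightarrow> \<delta> \<in> F (cd K c) A \<Longrightarrow> pull K A c \<delta> \<in> F (dm K c) A"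
  using sub unfolding additive_subfunctor_def by blast

lemmas et2u = et2[unfolded ET2_def]

lemma etri_hom: assumes "etri K A x y C \<delta>"
  shows "x \<in> Hom K A (cd K x) \<and> y \<in> Hom K (cd K x) C \<and> cd K x \<in> obj K"
proof -
  have h: "A \<in> obj K" "C \<in> obj K" "\<delta> \<in> Ext K C A" "(x, y) \<in> real K C A \<delta>"
    using assms unfolding etri_def by auto
  have "\<forall>C \<in> obj K. \<forall>A \<in> obj K. \<forall>\<delta> \<in> Ext K C A.
        (\<forall>(x, y) \<in> real K C A \<delta>. cd K x \<in> obj K \<and> x \<in> Hom K A (cd K x) \<and> y \<in> Hom K (cd K x) C)"
    using et2u[THEN conjunct1] by fast
  then show ?thesis using h by fast
qed

lemma split_real: "C \<in> obj K \<Longrightarrow> A \<in> obj K \<Longrightarrow> \<exists>P i1 i2 p1 p2.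
        is_biproduct K A C P i1 i2 p1 p2 \<and> (i1, p2) \<in> real K C A (ezero K C A)"
  using et2u[THEN conjunct2, THEN conjunct1] by blast

lemma et2_morph: "C \<in> obj K \<Longrightarrow> A \<in> obj K \<Longrightarrow> C' \<in> obj K \<Longrightarrow> A' \<in> obj K \<Longrightarrow>
      \<delta> \<in> Ext K C A \<Longrightarrow> \<delta>' \<in> Ext K C' A' \<Longrightarrow>
      (x, y) \<in> real K C A \<delta> \<Longrightarrow> (x', y') \<in> real K C' A' \<delta>' \<Longrightarrow>
      a \<in> Hom K A A' \<Longrightarrow> c \<in> Hom K C C' \<Longrightarrow> push K C a \<delta> = pull K A' c \<delta>' \<Longrightarrow>
      (\<exists>b \<in> Hom K (cd K x) (cd K x'). cmp K b x = cmp K x' a \<and> cmp K y' b = cmp K c y)"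
  using et2u[THEN conjunct2, THEN conjunct2, THEN conjunct2] by blast

lemma ezero_Ext: "C \<in> obj K \<Longrightarrow> A \<in> obj K \<Longrightarrow> ezero K C A \<in> Ext K C A"
  using extgrp[of C A] comm_group.axioms(2) group.is_monoid monoid.one_closed by fastforce

lemma factor:
  assumes t: "etri K A e y C0 \<delta>0" and a: "a \<in> Hom K A Y" and z: "push K C0 a \<delta>0 = ezero K C0 Y"
  shows "\<exists>h \<in> Hom K (cd K e) Y. cmp K h e = a"
proof -
  have A: "A \<in> obj K" "C0 \<in> obj K" "\<delta>0 \<in> Ext K C0 A" "(e, y) \<in> real K C0 A \<delta>0"
    using t unfolding etri_def by auto
  have Y: "Y \<in> obj K" using a mor_obj by (auto simp: Hom_iff)
  obtain P i1 i2 p1 p2 where bp: "is_biproduct K Y C0 P i1 i2 p1 p2"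
     and r: "(i1, p2) \<in> real K C0 Y (ezero K C0 Y)" using split_real[OF A(2) Y] by blast
  have bpd: "i1 \<in> Hom K Y P" "p1 \<in> Hom K P Y" "cmp K p1 i1 = idm K Y"
    using bp unfolding is_biproduct_def by auto
  have "push K C0 a \<delta>0 = pull K Y (idm K C0) (ezero K C0 Y)"
    using z pull_id[OF A(2) Y ezero_Ext[OF A(2) Y]] by simp
  then obtain b where b: "b \<in> Hom K (cd K e) (cd K i1)" "cmp K b e = cmp K i1 a"
    using et2_morph[OF A(2) A(1) A(2) Y A(3) ezero_Ext[OF A(2) Y] A(4) r a idm_Hom[OF A(2)]] by blast
  have e: "e \<in> Hom K A (cd K e)" using etri_hom[OF t] by blast
  have "cmp K (cmp K p1 b) e = cmp K p1 (cmp K b e)"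
    using assoc[of e b p1] b bpd e by (auto simp: Hom_iff)
  also have "\<dots> = cmp K p1 (cmp K i1 a)" using b by simp
  also have "\<dots> = cmp K (cmp K p1 i1) a"
    using assoc[of a i1 p1] a bpd by (auto simp: Hom_iff)
  also have "\<dots> = a" using bpd cmp_idl[of a] a by (auto simp: Hom_iff)
  finally show ?thesis using cmp_Hom[of b p1] b bpd by (auto simp: Hom_iff intro!: bexI[of _ "cmp K p1 b"])
qed

lemma cmp_idr: "f \<in> mor K \<Longrightarrow> cmp K f (idm K (dm K f)) = f"
  using cat unfolding is_category_def by blast

lemma real_ne: "C \<in> obj K \<Longrightarrow> A \<in> obj K \<Longrightarrow> \<delta> \<in> Ext K C A \<Longrightarrow> real K C A \<delta> \<noteq> {}"
  using et2u[THEN conjunct1] by blast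

lemma et3': "etri K A x y C \<delta> \<Longrightarrow> etri K A' x' y' C' \<delta>' \<Longrightarrow>
        a \<in> Hom K A A' \<Longrightarrow> b \<in> Hom K (cd K x) (cd K x') \<Longrightarrow> cmp K b x = cmp K x' a \<Longrightarrow>
        (\<exists>c. etri_morph K A x y C \<delta> A' x' y' C' \<delta>' a b c)"
  using et3 unfolding ET3_def by blast

lemma Finj_perpR: "F_inj K F \<subseteq> perpR K (Ph K F)"
proof
  fix i assume i: "i \<in> F_inj K F"
  have im: "i \<in> mor K" using i by (simp add: F_inj_def)
  show "i \<in> perpR K (Ph K F)" unfolding perpR_def
  proof (intro CollectI conjI ballI im)
    fix \<phi> \<delta> assume p: "\<phi> \<in> Ph K F" and d: "\<delta> \<in> Ext K (cd K \<phi>) (dm K i)"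
    have pm: "\<phi> \<in> mor K" using p by (simp add: Ph_def)
    have "pull K (dm K i) \<phi> \<delta> \<in> F (dm K \<phi>) (dm K i)" using p d mor_obj[OF im] by (auto simp: Ph_def)
    then have "push K (dm K \<phi>) i (pull K (dm K i) \<phi> \<delta>) = ezero K (dm K \<phi>) (cd K i)"
      using i mor_obj[OF pm] by (auto simp: F_inj_def)
    then show "pull K (cd K i) \<phi> (push K (cd K \<phi>) i \<delta>) = ezero K (dm K \<phi>) (cd K i)"
      using bif[OF im pm d] by simp
  qed
qed

lemma Ph_perpL: "Ph K F \<subseteq> perpL K (F_inj K F)"
proof
  fix \<phi> assume p: "\<phi> \<in> Ph K F"
  have pm: "\<phi> \<in> mor K" using p by (simp add: Ph_def)
  show "\<phi> \<in> perpL K (F_inj K F)" unfolding perpL_def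
  proof (intro CollectI conjI ballI pm)
    fix i \<delta> assume i: "i \<in> F_inj K F" and d: "\<delta> \<in> Ext K (cd K \<phi>) (dm K i)"
    have im: "i \<in> mor K" using i by (simp add: F_inj_def)
    have "pull K (dm K i) \<phi> \<delta> \<in> F (dm K \<phi>) (dm K i)" using p d mor_obj[OF im] by (auto simp: Ph_def)
    then have "push K (dm K \<phi>) i (pull K (dm K i) \<phi> \<delta>) = ezero K (dm K \<phi>) (cd K i)"
      using i mor_obj[OF pm] by (auto simp: F_inj_def)
    then show "pull K (cd K i) \<phi> (push K (cd K \<phi>) i \<delta>) = ezero K (dm K \<phi>) (cd K i)"
      using bif[OF im pm d] by simp
  qed
qed

lemma perpR_Finj: "perpR K (Ph K F) \<subseteq> F_inj K F"
proof
  fix g assume g: "g \<in> perpR K (Ph K F)"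
  have gm: "g \<in> mor K" using g by (simp add: perpR_def)
  define A where "A = dm K g"
  have A: "A \<in> obj K" using mor_obj[OF gm] A_def by simp
  obtain e y C0 \<delta>0 x' y' C' \<delta>' b \<phi> where t: "etri K A e y C0 \<delta>0" and eF: "e \<in> F_inj K F"
    and t': "etri K A x' y' C' \<delta>'" and p: "\<phi> \<in> Ph K F"
    and mo: "etri_morph K A e y C0 \<delta>0 A x' y' C' \<delta>' (idm K A) b \<phi>"
  proof -
    have "\<exists>e y C \<delta>. etri K A e y C \<delta> \<and> \<delta> \<in> F C A \<and> e \<in> F_inj K F \<and>
        (\<exists>x' y' C' \<delta>' b \<phi>. etri K A x' y' C' \<delta>' \<and> \<phi> \<in> Ph K F \<and>
           etri_morph K A e y C \<delta> A x' y' C' \<delta>' (idm K A) b \<phi>)"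
      using esi A unfolding enough_special_inj_def by (rule bspec)
    then show ?thesis using that by blast
  qed
  have td: "C0 \<in> obj K" "\<delta>0 \<in> Ext K C0 A" "C' \<in> obj K" "\<delta>' \<in> Ext K C' A"
    using t t' by (auto simp: etri_def)
  have ph: "\<phi> \<in> Hom K C0 C'" "push K C0 (idm K A) \<delta>0 = pull K A \<phi> \<delta>'"
    using mo by (auto simp: etri_morph_def)
  then have d0: "\<delta>0 = pull K A \<phi> \<delta>'" using push_id td A by simp
  have pm: "\<phi> \<in> mor K" "dm K \<phi> = C0" "cd K \<phi> = C'" using ph by (auto simp: Hom_iff)
  have "push K C0 g \<delta>0 = pull K (cd K g) \<phi> (push K (cd K \<phi>) g \<delta>')"
    using bif[OF gm pm(1)] d0 pm td A_def by simp
  also have "\<dots> = ezero K C0 (cd K g)" using g p td pm A_def by (auto simp: perpR_def)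
  finally have z: "push K C0 g \<delta>0 = ezero K C0 (cd K g)" .
  obtain h where h: "h \<in> Hom K (cd K e) (cd K g)" "cmp K h e = g"
    using factor[OF t _ z] gm A_def by (auto simp: Hom_iff)
  have em: "e \<in> Hom K A (cd K e)" using etri_hom[OF t] by blast
  show "g \<in> F_inj K F" unfolding F_inj_def
  proof (intro CollectI conjI ballI gm)
    fix C \<delta> assume C: "C \<in> obj K" and d: "\<delta> \<in> F C (dm K g)"
    have dE: "\<delta> \<in> Ext K C (dm K e)" using F_Ext[OF C A] d em A_def by (auto simp: Hom_iff)
    have "push K C g \<delta> = push K C h (push K C e \<delta>)"
      using push_cmp[OF C _ _ dE] h em by (auto simp: Hom_iff)
    also have "push K C e \<delta> = ezero K C (cd K e)"
      using eF C d em A_def by (auto simp: F_inj_def Hom_iff)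
    also have "push K C h (ezero K C (cd K e)) = ezero K C (cd K g)"
      using push_zero[OF C, of h] h by (auto simp: Hom_iff)
    finally show "push K C g \<delta> = ezero K C (cd K g)" .
  qed
qed

lemma perpL_Ph: "perpL K (F_inj K F) \<subseteq> Ph K F"
proof
  fix g assume g: "g \<in> perpL K (F_inj K F)"
  have gm: "g \<in> mor K" using g by (simp add: perpL_def)
  define X where "X = dm K g"
  have X: "X \<in> obj K" "cd K g \<in> obj K" using mor_obj[OF gm] X_def by auto
  show "g \<in> Ph K F" unfolding Ph_def
  proof (intro CollectI conjI ballI gm)
    fix A \<delta> assume A: "A \<in> obj K" and d: "\<delta> \<in> Ext K (cd K g) A"
    define \<theta> where "\<theta> = pull K A g \<delta>"
    have th: "\<theta> \<in> Ext K X A" using pull_closed[OF A gm d] \<theta>_def X_def by simp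
    obtain e y C0 \<delta>0 where t: "etri K A e y C0 \<delta>0" and d0: "\<delta>0 \<in> F C0 A" and eF: "e \<in> F_inj K F"
      using esi A unfolding enough_special_inj_def by blast
    have em: "e \<in> Hom K A (cd K e)" "cd K e \<in> obj K" using etri_hom[OF t] by auto
    have emor: "e \<in> mor K" "dm K e = A" using em by (auto simp: Hom_iff)
    have "push K X e \<theta> = pull K (cd K e) g (push K (cd K g) e \<delta>)"
      using bif[OF emor(1) gm] d emor \<theta>_def X_def by simp
    also have "\<dots> = ezero K X (cd K e)" using g eF d emor X_def by (auto simp: perpL_def)
    finally have z: "push K X e \<theta> = ezero K X (cd K e)" .
    obtain x z where r: "(x, z) \<in> real K X A \<theta>" using real_ne[OF X(1) A th] by auto
    have tt: "etri K A x z X \<theta>" using r X A th by (simp add: etri_def)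
    have xm: "x \<in> Hom K A (cd K x)" using etri_hom[OF tt] by blast
    obtain P i1 i2 p1 p2 where bp: "is_biproduct K (cd K e) X P i1 i2 p1 p2"
      and r0: "(i1, p2) \<in> real K X (cd K e) (ezero K X (cd K e))" using split_real[OF X(1) em(2)] by blast
    have bpd: "i1 \<in> Hom K (cd K e) P" "p1 \<in> Hom K P (cd K e)" "cmp K p1 i1 = idm K (cd K e)"
      using bp unfolding is_biproduct_def by auto
    have "push K X e \<theta> = pull K (cd K e) (idm K X) (ezero K X (cd K e))"
      using z pull_id[OF X(1) em(2) ezero_Ext[OF X(1) em(2)]] by simp
    then obtain bb where bb: "bb \<in> Hom K (cd K x) (cd K i1)" "cmp K bb x = cmp K i1 e"
      using et2_morph[OF X(1) A X(1) em(2) th ezero_Ext[OF X(1) em(2)] r r0 em(1) idm_Hom[OF X(1)]] by blast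
    have "cmp K (cmp K p1 bb) x = cmp K p1 (cmp K bb x)"
      using assoc[of x bb p1] bb bpd xm by (auto simp: Hom_iff)
    also have "\<dots> = cmp K p1 (cmp K i1 e)" using bb by simp
    also have "\<dots> = cmp K (cmp K p1 i1) e"
      using assoc[of e i1 p1] em bpd by (auto simp: Hom_iff)
    also have "\<dots> = e" using bpd cmp_idl[of e] em by (auto simp: Hom_iff)
    also have "\<dots> = cmp K e (idm K A)" using cmp_idr[of e] emor by simp
    finally have cc: "cmp K (cmp K p1 bb) x = cmp K e (idm K A)" .
    have bH: "cmp K p1 bb \<in> Hom K (cd K x) (cd K e)"
      using cmp_Hom[of bb p1] bb bpd by (auto simp: Hom_iff)
    obtain c where c: "etri_morph K A x z X \<theta> A e y C0 \<delta>0 (idm K A) (cmp K p1 bb) c"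
      using et3'[OF tt t idm_Hom[OF A] bH cc] by blast
    have c1: "c \<in> Hom K X C0" "push K X (idm K A) \<theta> = pull K A c \<delta>0"
      using c by (auto simp: etri_morph_def)
    have "\<theta> = pull K A c \<delta>0" using c1 push_id[OF X(1) A th] by simp
    moreover have "pull K A c \<delta>0 \<in> F X A" using F_pull[OF A, of c \<delta>0] c1 d0 by (auto simp: Hom_iff)
    ultimately show "pull K A g \<delta> \<in> F (dm K g) A" using \<theta>_def X_def by simp
  qed
qed

lemma Ph_iff: "\<phi> \<in> Hom K X Y \<Longrightarrow> \<phi> \<in> Ph K F \<longleftrightarrow> (\<forall>A\<in>obj K. \<forall>\<delta>\<in>Ext K Y A. pull K A \<phi> \<delta> \<in> F X A)"
  by (auto simp: Ph_def Hom_iff)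

lemma Finj_iff: "i \<in> Hom K X Y \<Longrightarrow> i \<in> F_inj K F \<longleftrightarrow> (\<forall>C\<in>obj K. \<forall>\<delta>\<in>F C X. push K C i \<delta> = ezero K C Y)"
  by (auto simp: F_inj_def Hom_iff)

lemma hgrp: "X \<in> obj K \<Longrightarrow> Y \<in> obj K \<Longrightarrow> group (HomGrp K X Y)"
  using homgrp comm_group.axioms(2) by blast

lemma Ph_sub: assumes X: "X \<in> obj K" and Y: "Y \<in> obj K"
  shows "subgroup (Ph K F \<inter> Hom K X Y) (HomGrp K X Y)"
proof (rule subgroup.intro)
  interpret G: group "HomGrp K X Y" using hgrp[OF X Y] .
  show "Ph K F \<inter> Hom K X Y \<subseteq> carrier (HomGrp K X Y)" by auto
  fix \<phi> \<psi> assume p: "\<phi> \<in> Ph K F \<inter> Hom K X Y" and q: "\<psi> \<in> Ph K F \<inter> Hom K X Y"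
  have m: "madd K \<phi> \<psi> \<in> Hom K X Y" using G.m_closed[of \<phi> \<psi>] p q by simp
  show "\<phi> \<otimes>\<^bsub>HomGrp K X Y\<^esub> \<psi> \<in> Ph K F \<inter> Hom K X Y"
  proof -
    have "madd K \<phi> \<psi> \<in> Ph K F" unfolding Ph_iff[OF m]
    proof (intro ballI)
      fix A \<delta> assume A: "A \<in> obj K" and d: "\<delta> \<in> Ext K Y A"
      interpret h: group_hom "HomGrp K X Y" "ExtGrp K X A" "\<lambda>c. pull K A c \<delta>"
        using pullmor_hom[OF Y A X d] .
      have "pull K A (madd K \<phi> \<psi>) \<delta> = eadd K X A (pull K A \<phi> \<delta>) (pull K A \<psi> \<delta>)"
        using h.hom_mult[of \<phi> \<psi>] p q by simp
      moreover have "pull K A \<phi> \<delta> \<in> F X A" "pull K A \<psi> \<delta> \<in> F X A"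
        using p q Ph_iff A d by auto
      ultimately show "pull K A (madd K \<phi> \<psi>) \<delta> \<in> F X A"
        using subgroup.m_closed[OF subF[OF X A]] by simp
    qed
    then show ?thesis using m by simp
  qed
next
  interpret G: group "HomGrp K X Y" using hgrp[OF X Y] .
  have m: "mzero K X Y \<in> Hom K X Y" using G.one_closed by simp
  have "mzero K X Y \<in> Ph K F" unfolding Ph_iff[OF m]
  proof (intro ballI)
    fix A \<delta> assume A: "A \<in> obj K" and d: "\<delta> \<in> Ext K Y A"
    interpret h: group_hom "HomGrp K X Y" "ExtGrp K X A" "\<lambda>c. pull K A c \<delta>"
      using pullmor_hom[OF Y A X d] .
    have "pull K A (mzero K X Y) \<delta> = ezero K X A" using h.hom_one by simp
    then show "pull K A (mzero K X Y) \<delta> \<in> F X A"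
      using subgroup.one_closed[OF subF[OF X A]] by simp
  qed
  then show "\<one>\<^bsub>HomGrp K X Y\<^esub> \<in> Ph K F \<inter> Hom K X Y" using m by simp
next
  interpret G: group "HomGrp K X Y" using hgrp[OF X Y] .
  fix \<phi> assume p: "\<phi> \<in> Ph K F \<inter> Hom K X Y"
  have m: "inv\<^bsub>HomGrp K X Y\<^esub> \<phi> \<in> Hom K X Y" using G.inv_closed[of \<phi>] p by simp
  have "inv\<^bsub>HomGrp K X Y\<^esub> \<phi> \<in> Ph K F" unfolding Ph_iff[OF m]
  proof (intro ballI)
    fix A \<delta> assume A: "A \<in> obj K" and d: "\<delta> \<in> Ext K Y A"
    interpret h: group_hom "HomGrp K X Y" "ExtGrp K X A" "\<lambda>c. pull K A c \<delta>"
      using pullmor_hom[OF Y A X d] .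
    have "pull K A (inv\<^bsub>HomGrp K X Y\<^esub> \<phi>) \<delta> = inv\<^bsub>ExtGrp K X A\<^esub> (pull K A \<phi> \<delta>)"
      using h.hom_inv[of \<phi>] p by simp
    moreover have "pull K A \<phi> \<delta> \<in> F X A" using p Ph_iff A d by auto
    ultimately show "pull K A (inv\<^bsub>HomGrp K X Y\<^esub> \<phi>) \<delta> \<in> F X A"
      using subgroup.m_inv_closed[OF subF[OF X A]] by simp
  qed
  then show "inv\<^bsub>HomGrp K X Y\<^esub> \<phi> \<in> Ph K F \<inter> Hom K X Y" using m by simp
qed

lemma Finj_sub: assumes X: "X \<in> obj K" and Y: "Y \<in> obj K"
  shows "subgroup (F_inj K F \<inter> Hom K X Y) (HomGrp K X Y)"
proof (rule subgroup.intro)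
  interpret G: group "HomGrp K X Y" using hgrp[OF X Y] .
  show "F_inj K F \<inter> Hom K X Y \<subseteq> carrier (HomGrp K X Y)" by auto
  fix \<phi> \<psi> assume p: "\<phi> \<in> F_inj K F \<inter> Hom K X Y" and q: "\<psi> \<in> F_inj K F \<inter> Hom K X Y"
  have m: "madd K \<phi> \<psi> \<in> Hom K X Y" using G.m_closed[of \<phi> \<psi>] p q by simp
  show "\<phi> \<otimes>\<^bsub>HomGrp K X Y\<^esub> \<psi> \<in> F_inj K F \<inter> Hom K X Y"
  proof -
    have "madd K \<phi> \<psi> \<in> F_inj K F" unfolding Finj_iff[OF m]
    proof (intro ballI)
      fix C \<delta> assume C: "C \<in> obj K" and d: "\<delta> \<in> F C X"
      have dE: "\<delta> \<in> Ext K C X" using F_Ext[OF C X d] .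
      interpret h: group_hom "HomGrp K X Y" "ExtGrp K C Y" "\<lambda>c. push K C c \<delta>"
        using pushmor_hom[OF C X Y dE] .
      have EGr: "group (ExtGrp K C Y)" using extgrp[OF C Y] comm_group.axioms(2) by blast
      have "push K C (madd K \<phi> \<psi>) \<delta> = eadd K C Y (push K C \<phi> \<delta>) (push K C \<psi> \<delta>)"
        using h.hom_mult[of \<phi> \<psi>] p q by simp
      moreover have "push K C \<phi> \<delta> = ezero K C Y" "push K C \<psi> \<delta> = ezero K C Y"
        using p q Finj_iff C d by auto
      ultimately show "push K C (madd K \<phi> \<psi>) \<delta> = ezero K C Y"
        using monoid.l_one[OF group.is_monoid[OF EGr], of "ezero K C Y"] monoid.one_closed[OF group.is_monoid[OF EGr]] by simp
    qed
    then show ?thesis using m by simp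
  qed
next
  interpret G: group "HomGrp K X Y" using hgrp[OF X Y] .
  have m: "mzero K X Y \<in> Hom K X Y" using G.one_closed by simp
  have "mzero K X Y \<in> F_inj K F" unfolding Finj_iff[OF m]
  proof (intro ballI)
    fix C \<delta> assume C: "C \<in> obj K" and d: "\<delta> \<in> F C X"
    have dE: "\<delta> \<in> Ext K C X" using F_Ext[OF C X d] .
    interpret h: group_hom "HomGrp K X Y" "ExtGrp K C Y" "\<lambda>c. push K C c \<delta>"
      using pushmor_hom[OF C X Y dE] .
    show "push K C (mzero K X Y) \<delta> = ezero K C Y" using h.hom_one by simp
  qed
  then show "\<one>\<^bsub>HomGrp K X Y\<^esub> \<in> F_inj K F \<inter> Hom K X Y" using m by simp
next
  interpret G: group "HomGrp K X Y" using hgrp[OF X Y] .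
  fix \<phi> assume p: "\<phi> \<in> F_inj K F \<inter> Hom K X Y"
  have m: "inv\<^bsub>HomGrp K X Y\<^esub> \<phi> \<in> Hom K X Y" using G.inv_closed[of \<phi>] p by simp
  have "inv\<^bsub>HomGrp K X Y\<^esub> \<phi> \<in> F_inj K F" unfolding Finj_iff[OF m]
  proof (intro ballI)
    fix C \<delta> assume C: "C \<in> obj K" and d: "\<delta> \<in> F C X"
    have dE: "\<delta> \<in> Ext K C X" using F_Ext[OF C X d] .
    interpret h: group_hom "HomGrp K X Y" "ExtGrp K C Y" "\<lambda>c. push K C c \<delta>"
      using pushmor_hom[OF C X Y dE] .
    have EGr: "group (ExtGrp K C Y)" using extgrp[OF C Y] comm_group.axioms(2) by blast
    have "push K C (inv\<^bsub>HomGrp K X Y\<^esub> \<phi>) \<delta> = inv\<^bsub>ExtGrp K C Y\<^esub> (push K C \<phi> \<delta>)"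
      using h.hom_inv[of \<phi>] p by simp
    moreover have "push K C \<phi> \<delta> = ezero K C Y" using p Finj_iff C d by auto
    ultimately show "push K C (inv\<^bsub>HomGrp K X Y\<^esub> \<phi>) \<delta> = ezero K C Y"
      using monoid.inv_one[OF group.is_monoid[OF EGr]] by simp
  qed
  then show "inv\<^bsub>HomGrp K X Y\<^esub> \<phi> \<in> F_inj K F \<inter> Hom K X Y" using m by simp
qed

lemma Ph_ideal: "is_ideal K (Ph K F)"
  unfolding is_ideal_def
proof (intro conjI ballI allI impI)
  show "Ph K F \<subseteq> mor K" by (auto simp: Ph_def)
  show "\<And>A B. A \<in> obj K \<Longrightarrow> B \<in> obj K \<Longrightarrow> subgroup (Ph K F \<inter> Hom K A B) (HomGrp K A B)"
    by (rule Ph_sub)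
  fix f g h assume f: "f \<in> Ph K F" and g: "g \<in> mor K" and h: "h \<in> mor K"
    and dg: "dm K g = cd K f" and ch: "cd K h = dm K f"
  have fm: "f \<in> mor K" using f by (simp add: Ph_def)
  have fh: "cmp K f h \<in> mor K" "dm K (cmp K f h) = dm K h" "cd K (cmp K f h) = cd K f"
    using cmp_mor[OF h fm] ch by auto
  have gfh: "cmp K g (cmp K f h) \<in> mor K" "dm K (cmp K g (cmp K f h)) = dm K h"
      "cd K (cmp K g (cmp K f h)) = cd K g"
    using cmp_mor[OF fh(1) g] fh dg by auto
  show "cmp K g (cmp K f h) \<in> Ph K F" unfolding Ph_def
  proof (intro CollectI conjI ballI gfh(1))
    fix A \<delta> assume A: "A \<in> obj K" and d: "\<delta> \<in> Ext K (cd K (cmp K g (cmp K f h))) A"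
    have d': "\<delta> \<in> Ext K (cd K g) A" using d gfh by simp
    have p1: "pull K A g \<delta> \<in> Ext K (cd K f) A" using pull_closed[OF A g d'] dg by simp
    have "pull K A (cmp K g (cmp K f h)) \<delta> = pull K A (cmp K f h) (pull K A g \<delta>)"
      using pull_cmp[OF A g fh(1) d'] fh dg by simp
    also have "\<dots> = pull K A h (pull K A f (pull K A g \<delta>))"
      using pull_cmp[OF A fm h p1] ch by simp
    finally have eq: "pull K A (cmp K g (cmp K f h)) \<delta> = pull K A h (pull K A f (pull K A g \<delta>))" .
    have "pull K A f (pull K A g \<delta>) \<in> F (dm K f) A" using f A p1 by (auto simp: Ph_def)
    then have "pull K A h (pull K A f (pull K A g \<delta>)) \<in> F (dm K h) A"
      using F_pull[OF A h] ch by simp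
    then show "pull K A (cmp K g (cmp K f h)) \<delta> \<in> F (dm K (cmp K g (cmp K f h))) A"
      using eq gfh by simp
  qed
qed

lemma Finj_ideal: "is_ideal K (F_inj K F)"
  unfolding is_ideal_def
proof (intro conjI ballI allI impI)
  show "F_inj K F \<subseteq> mor K" by (auto simp: F_inj_def)
  show "\<And>A B. A \<in> obj K \<Longrightarrow> B \<in> obj K \<Longrightarrow> subgroup (F_inj K F \<inter> Hom K A B) (HomGrp K A B)"
    by (rule Finj_sub)
  fix f g h assume f: "f \<in> F_inj K F" and g: "g \<in> mor K" and h: "h \<in> mor K"
    and dg: "dm K g = cd K f" and ch: "cd K h = dm K f"
  have fm: "f \<in> mor K" using f by (simp add: F_inj_def)
  have fh: "cmp K f h \<in> mor K" "dm K (cmp K f h) = dm K h" "cd K (cmp K f h) = cd K f"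
    using cmp_mor[OF h fm] ch by auto
  have gfh: "cmp K g (cmp K f h) \<in> mor K" "dm K (cmp K g (cmp K f h)) = dm K h"
      "cd K (cmp K g (cmp K f h)) = cd K g"
    using cmp_mor[OF fh(1) g] fh dg by auto
  show "cmp K g (cmp K f h) \<in> F_inj K F" unfolding F_inj_def
  proof (intro CollectI conjI ballI gfh(1))
    fix C \<delta> assume C: "C \<in> obj K" and d: "\<delta> \<in> F C (dm K (cmp K g (cmp K f h)))"
    have d': "\<delta> \<in> F C (dm K h)" using d gfh by simp
    have dE: "\<delta> \<in> Ext K C (dm K h)" using F_Ext[OF C _ d'] mor_obj[OF h] by blast
    have dE2: "\<delta> \<in> Ext K C (dm K (cmp K f h))" using dE fh by simp
    have ph: "push K C h \<delta> \<in> F C (dm K f)" using F_push[OF C h d'] ch by simp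
    have phE: "push K C h \<delta> \<in> Ext K C (dm K f)" using push_closed[OF C h dE] ch by simp
    have "push K C (cmp K g (cmp K f h)) \<delta> = push K C g (push K C (cmp K f h) \<delta>)"
      using push_cmp[OF C fh(1) g dE2] fh dg by simp
    also have "push K C (cmp K f h) \<delta> = push K C f (push K C h \<delta>)"
      using push_cmp[OF C h fm dE] ch by simp
    also have "push K C f (push K C h \<delta>) = ezero K C (cd K f)"
      using f C ph by (auto simp: F_inj_def)
    also have "push K C g (ezero K C (cd K f)) = ezero K C (cd K g)"
      using push_zero[OF C g] dg by simp
    finally show "push K C (cmp K g (cmp K f h)) \<delta> = ezero K C (cd K (cmp K g (cmp K f h)))"
      using gfh by simp
  qed
qed

lemma main: "E_cotorsion_pair K (Ph K F) (F_inj K F) \<and> perpR K (Ph K F) = F_inj K F"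
  unfolding E_cotorsion_pair_def
  using Ph_ideal Finj_ideal Finj_perpR Ph_perpL perpR_Finj perpL_Ph by blast

end

theorem corollary3p14:
  fixes K :: "('o, 'm, 'e) extri_data" and F :: "'o \<Rightarrow> 'o \<Rightarrow> 'e set"
  assumes "is_additive_category K" and "ET1 K" and "ET2 K" and "ET3 K"
    and "additive_subfunctor K F"
    and "enough_special_inj K F"
  shows "E_cotorsion_pair K (Ph K F) (F_inj K F) \<and> perpR K (Ph K F) = F_inj K F"
proof -
  interpret ctx K F using assms by (rule ctx.intro)
  show ?thesis by (rule main)
qed

end
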